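(* Let $\Phi(z)=\sum_{n\ge1}\varphi_nz^n$ be the power series, analytic near $0$, with $\varphi_1=1$ satisfying $$\int_0^1\Phi\big(rz+(1-r)z^2\big)\,dr=\tfrac12\,\Phi(z).$$ Then $F(z)=\int_0^z\Phi(\zeta)d\zeta$ satisfies $\frac{F(z)-F(z^2)}{z-z^2}=\frac12F'(z)$, and for all $n\ge2$: $$\varphi_n=\frac{n+1}{n-1}\varphi_{n-1}\ \text{ if $n$ is even},\qquad \varphi_n=\frac{n+1}{n-1}\varphi_{n-1}-\frac{4}{n-1}\varphi_{(n-1)/2}\ \text{ if $n$ is odd}.$$ Equivalently, $\psi_n=\varphi_n/n$ satisfies $\psi_1=1$, $\psi_n=(1+\frac1n)\psi_{n-1}$ for even $n$, and $\psi_n=(1+\frac1n)\psi_{n-1}-\frac2n\psi_{(n-1)/2}$ for odd $n\ge3$.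
   Context: This is the equation $\int\Phi(P_r(z))\mu(dr)=\Phi(z)\int p_{1r}\mu(dr)$ for $P_r(z)=rz+(1-r)z^2$ with $r$ uniformly distributed on $(0,1)$. *)

theory Defs
  imports "HOL-Complex_Analysis.Complex_Analysis"
begin

end

theory Submission
  imports Defs
begin


lemma part1:
  fixes \<phi> :: "nat \<Rightarrow> complex" and \<Phi> F :: "complex \<Rightarrow> complex"
  assumes conv: "conv_radius \<phi> > 0"
    and Phi_def: "\<And>z. \<Phi> z = (\<Sum>n. \<phi> n * z ^ n)"
  obtains R :: real and Gf :: "complex fps" where "R > 0" "ereal R \<le> fps_conv_radius Gf"
    "ereal R \<le> fps_conv_radius (Abs_fps \<phi>)"
    "\<And>k. Gf $ k = (if k = 0 then 0 else \<phi> (k - 1) / of_nat k)"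
    "\<And>z. norm z < R \<Longrightarrow> (eval_fps Gf has_field_derivative \<Phi> z) (at z)"
proof -
  obtain R0 :: real where R0: "0 < R0" "ereal R0 < conv_radius \<phi>"
    using conv by (metis ereal_dense2 ereal_less(2) less_ereal.simps(1) order.strict_trans zero_ereal_def)
  define Q where "Q = Abs_fps (\<lambda>k. \<phi> k / of_nat (Suc k))"
  have sm: "summable (\<lambda>n. norm (\<phi> n * (of_real R0::complex) ^ n))"
    using R0 by (intro abs_summable_in_conv_radius) auto
  have "summable (\<lambda>n. fps_nth Q n * (of_real R0::complex) ^ n)"
  proof (rule summable_comparison_test[OF _ sm])
    show "\<exists>N. \<forall>n\<ge>N. norm (Q $ n * complex_of_real R0 ^ n) \<le> norm (\<phi> n * complex_of_real R0 ^ n)"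
    proof (intro exI[of _ 0] allI impI)
      fix n :: nat
      have c1: "1 \<le> cmod (of_nat (Suc n) :: complex)" unfolding norm_of_nat by simp
      have "norm (Q $ n * complex_of_real R0 ^ n) = norm (\<phi> n * complex_of_real R0 ^ n) / cmod (of_nat (Suc n) :: complex)"
        by (simp add: Q_def norm_mult norm_divide del: of_nat_Suc)
      also have "\<dots> \<le> norm (\<phi> n * complex_of_real R0 ^ n)"
        using c1 by (simp add: divide_le_eq mult_le_cancel_left1)
      finally show "norm (Q $ n * complex_of_real R0 ^ n) \<le> norm (\<phi> n * complex_of_real R0 ^ n)" .
    qed
  qed
  hence cQ: "fps_conv_radius Q \<ge> R0"
    using conv_radius_geI[of "fps_nth Q" "of_real R0"] R0 by (auto simp: fps_conv_radius_def)
  define Gf where "Gf = fps_X * Q"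
  have cG: "fps_conv_radius Gf \<ge> R0"
    using fps_conv_radius_mult[of fps_X Q] cQ by (auto simp: Gf_def)
  have cP: "fps_conv_radius (Abs_fps \<phi>) \<ge> R0"
    using R0 by (simp add: fps_conv_radius_def)
  have Gn: "Gf $ k = (if k = 0 then 0 else \<phi> (k - 1) / of_nat k)" for k
    by (cases k) (auto simp: Gf_def Q_def)
  have dG: "fps_deriv Gf = Abs_fps \<phi>"
    by (rule fps_ext) (simp add: Gn del: of_nat_Suc)
  have "(eval_fps Gf has_field_derivative \<Phi> z) (at z)" if "norm z < R0" for z
  proof -
    have "(eval_fps Gf has_field_derivative eval_fps (fps_deriv Gf) z) (at z)"
    proof (rule has_field_derivative_eval_fps)
      have "ereal (cmod z) < ereal R0" using that by simp
      then show "ereal (cmod z) < fps_conv_radius Gf" using cG by (rule order.strict_trans2)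
    qed
    moreover have "eval_fps (fps_deriv Gf) z = \<Phi> z"
      by (simp add: dG eval_fps_def Phi_def)
    ultimately show ?thesis by simp
  qed
  then show ?thesis using that[of R0 Gf] R0 cG cP Gn by auto
qed


lemma lt_min_le: "(a::'a::linorder) < b \<Longrightarrow> a < c \<Longrightarrow> min b c \<le> d \<Longrightarrow> a < d"
  by (metis less_le_trans min_less_iff_conj)

lemma part2:
  fixes Gf P :: "complex fps"
  assumes R: "R > 0" "ereal R \<le> fps_conv_radius Gf" "ereal R \<le> fps_conv_radius P"
    and d: "0 < d" "d \<le> R" "d \<le> 1"
    and eq: "\<And>z. norm z < d \<Longrightarrow> eval_fps Gf z - eval_fps Gf (z^2) = (z - z^2) * (eval_fps P z / 2)"
  shows "Gf $ k - (if even k then Gf $ (k div 2) else 0) =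
           ((if k = 0 then 0 else P $ (k - 1)) - (if k < 2 then 0 else P $ (k - 2))) / 2"
proof -
  define Cf where "Cf = Abs_fps (\<lambda>k. if even k then Gf $ (k div 2) else 0)"
  have lt: "ereal (norm z) < fps_conv_radius f" if "norm z < d" "ereal R \<le> fps_conv_radius f" for z and f :: "complex fps"
  proof -
    have "ereal (norm z) < ereal R" using that d by simp
    then show ?thesis using that(2) by (rule order.strict_trans2)
  qed
  have Ceval: "(\<lambda>k. Cf $ k * z ^ k) sums eval_fps Gf (z^2)" if "norm z < d" for z :: complex
  proof -
    have "norm (z^2) < d" using that d
    proof -
      have z1: "norm z < 1" using that d by simp
      have "norm (z^2) = norm z * norm z" by (simp add: power2_eq_square norm_mult)
      also have "\<dots> \<le> norm z * 1" using z1 by (intro mult_left_mono) auto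
      finally show ?thesis using that by simp
    qed
    hence s: "(\<lambda>n. Gf $ n * (z^2) ^ n) sums eval_fps Gf (z^2)"
      by (intro sums_eval_fps lt R)
    have "(\<lambda>n. Cf $ (2*n) * z ^ (2*n)) sums eval_fps Gf (z^2)"
      using s by (simp add: Cf_def power_mult)
    then show ?thesis
      by (subst (asm) sums_mono_reindex[where g = "\<lambda>n. 2*n"])
         (auto simp: strict_mono_def Cf_def elim!: oddE)
  qed
  have cC: "fps_conv_radius Cf \<ge> d / 2"
  proof -
    have "summable (\<lambda>k. Cf $ k * (of_real (d/2)::complex) ^ k)"
      using Ceval[of "of_real (d/2)"] d by (auto simp: sums_iff)
    from conv_radius_geI[OF this] show ?thesis using d by (simp add: fps_conv_radius_def)
  qed
  define H where "H = Gf - Cf - fps_const (1/2) * ((fps_X - fps_X^2) * P)"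
  have HH: "eval_fps H z = eval_fps 0 z \<and> ereal (norm z) < fps_conv_radius H" if "norm z < d / 2" for z
  proof -
    have z: "norm z < d" using that d by simp
    have lt2: "ereal (norm z) < fps_conv_radius Cf"
    proof -
      have "ereal (norm z) < ereal (d/2)" using that by simp
      then show ?thesis using cC by (rule order.strict_trans2)
    qed
    have lXX: "ereal (norm z) < fps_conv_radius (fps_X - fps_X^2 :: complex fps)"
      using fps_conv_radius_diff[of "fps_X::complex fps" "fps_X^2"] by (simp add: order.strict_trans2)
    have lXXP: "ereal (norm z) < fps_conv_radius ((fps_X - fps_X^2) * P)"
      by (rule lt_min_le[OF lXX lt[OF z R(3)] fps_conv_radius_mult])
    have lGC: "ereal (norm z) < fps_conv_radius (Gf - Cf)"
      by (rule lt_min_le[OF lt[OF z R(2)] lt2 fps_conv_radius_diff])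
    have lK: "ereal (norm z) < fps_conv_radius (fps_const (1/2) * ((fps_X - fps_X^2) * P))"
      by (rule lt_min_le[OF _ lXXP fps_conv_radius_mult]) simp
    have "eval_fps H z = eval_fps Gf z - eval_fps Cf z - 1/2 * ((eval_fps fps_X z - eval_fps (fps_X^2) z) * eval_fps P z)"
      unfolding H_def
      by (simp add: eval_fps_diff eval_fps_mult lGC lK lXXP lXX lt2 lt[OF z R(2)] lt[OF z R(3)]
            del: eval_fps_X eval_fps_X_power)
    also have "eval_fps Cf z = eval_fps Gf (z^2)" using Ceval[OF z] by (simp add: sums_iff eval_fps_def)
    also have "eval_fps Gf z - eval_fps Gf (z^2) = (z - z^2) * (eval_fps P z / 2)" by (rule eq[OF z])
    finally show ?thesis using lt_min_le[OF lGC lK fps_conv_radius_diff] by (simp add: H_def)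
  qed
  hence "eventually (\<lambda>z. eval_fps H z = eval_fps 0 z) (nhds 0)"
    using d by (intro eventually_nhds_in_open[of "ball 0 (d/2)", THEN eventually_mono]) auto
  hence "H = 0"
  proof (rule eval_fps_eqD[rotated 2])
    show "0 < fps_conv_radius H" using HH[of 0] d by (simp add: zero_ereal_def)
  qed simp
  hence "H $ k = 0" by simp
  moreover have "H $ k = Gf $ k - Cf $ k - 1/2 * ((if k=0 then 0 else P $ (k-1)) - (if k<2 then 0 else P $ (k-2)))"
    unfolding H_def left_diff_distrib fps_sub_nth fps_mult_left_const_nth fps_X_power_mult_nth fps_X_mult_nth
    by simp
  ultimately show ?thesis
    by (simp add: Cf_def)
qed


lemma alg1: fixes A B p c :: complex assumes "c+1\<noteq>0" "A/(2*(c+1)) - p/(c+1) = (A-B)/2" shows "A - 2*p = (c+1)*(A-B)"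
  using assms by (smt (verit, best) add_divide_eq_if_simps(4) divide_divide_eq_left
    nonzero_eq_divide_eq nonzero_mult_div_cancel_left
    zero_neq_numeral)
lemma alg2: fixes A B p c :: complex assumes "c\<noteq>0" "A - 2*p = (c+1)*(A-B)" shows "A = (2*c+2)/(2*c)*B - 4/(2*c)*p"
  using assms by (simp add: field_simps) algebra

lemma part3:
  fixes \<phi> :: "nat \<Rightarrow> complex"
  assumes hk: "\<And>k. (if k = 0 then 0 else \<phi> (k - 1) / of_nat k)
      - (if even k then (if k div 2 = 0 then 0 else \<phi> (k div 2 - 1) / of_nat (k div 2)) else 0)
      = ((if k = 0 then 0 else \<phi> (k - 1)) - (if k < 2 then 0 else \<phi> (k - 2))) / 2"
  shows "(\<forall>n\<ge>2. even n \<longrightarrow> \<phi> n = (of_nat n + 1) / (of_nat n - 1) * \<phi> (n - 1))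
     \<and> (\<forall>n\<ge>2. odd n \<longrightarrow>
            \<phi> n = (of_nat n + 1) / (of_nat n - 1) * \<phi> (n - 1)
                    - 4 / (of_nat n - 1) * \<phi> ((n - 1) div 2))"
proof (intro conjI allI impI)
  fix n :: nat assume n: "2 \<le> n" "even n"
  then obtain k where k: "n = 2*k" by (auto elim: evenE)
  define m where "m = k - 1"
  have m: "n = Suc (Suc (2*m))" using k n by (simp add: m_def)
  have h: "\<phi> n / of_nat (Suc n) = (\<phi> n - \<phi> (n - 1)) / 2"
    using hk[of "Suc n"] n by (simp del: of_nat_Suc)
  have nn: "of_nat n - (1::complex) = of_nat (Suc (2*m))" using m by simp
  show "\<phi> n = (of_nat n + 1) / (of_nat n - 1) * \<phi> (n - 1)"
    using h unfolding nn by (simp add: m field_simps del: of_nat_Suc) (simp add: algebra_simps)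
next
  fix n :: nat assume n: "2 \<le> n" "odd n"
  then obtain m where m0: "n = 2*m + 1" by (auto elim: oddE)
  hence m: "n = Suc (2*m)" "m \<ge> 1" using n by auto
  have h: "\<phi> n / of_nat (Suc n) - \<phi> m / of_nat (Suc m) = (\<phi> n - \<phi> (n - 1)) / 2"
    using hk[of "Suc n"] m by (simp del: of_nat_Suc)
  define c :: complex where "c = of_nat m"
  have c0: "c \<noteq> 0" using m by (simp add: c_def)
  have e1: "of_nat (Suc n) = 2*c + 2" "of_nat (Suc m) = c + 1" using m by (simp_all add: c_def)
  have c1: "c + 1 \<noteq> 0" using e1(2) by (metis of_nat_eq_0_iff nat.distinct(1))
  have h2: "\<phi> n - 2 * \<phi> m = (c+1) * (\<phi> n - \<phi> (n - 1))"
  proof (rule alg1[OF c1])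
    show "\<phi> n / (2*(c+1)) - \<phi> m / (c+1) = (\<phi> n - \<phi> (n - 1)) / 2"
      using h unfolding e1 by (simp add: algebra_simps)
  qed
  have e2: "of_nat n - (1::complex) = 2*c" "of_nat n + (1::complex) = 2*c+2" "(n - 1) div 2 = m"
    using m by (simp_all add: c_def)
  show "\<phi> n = (of_nat n + 1) / (of_nat n - 1) * \<phi> (n - 1) - 4 / (of_nat n - 1) * \<phi> ((n - 1) div 2)"
    unfolding e2 by (rule alg2[OF c0 h2])
qed

lemma alg3: fixes B x y :: complex assumes "x\<noteq>0" "y\<noteq>0" shows "(x+1)/y*B / x = (1+1/x)*(B/y)"
  using assms by (simp add: field_simps)
lemma alg4: fixes B p x y :: complex assumes "x\<noteq>0" "y\<noteq>0" shows "((x+1)/y*B - 4/y*p)/x = (1+1/x)*(B/y) - 2/x*(p/(y/2))"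
  using assms by (simp add: field_simps)

theorem mainTheorem5:
  fixes \<phi> :: "nat \<Rightarrow> complex" and \<Phi> F :: "complex \<Rightarrow> complex"
  assumes conv: "conv_radius \<phi> > 0"
    and Phi_def: "\<And>z. \<Phi> z = (\<Sum>n. \<phi> n * z ^ n)"
    and phi0: "\<phi> 0 = 0"
    and phi1: "\<phi> 1 = 1"
    and inteq: "\<exists>\<epsilon>>0. \<forall>z. norm z < \<epsilon> \<longrightarrow>
       ((\<lambda>r::real. \<Phi> (of_real r * z + (1 - of_real r) * z ^ 2)) has_integral \<Phi> z / 2) {0..1}"
    and F_def: "\<And>z. F z = contour_integral (linepath 0 z) \<Phi>"
  shows "(\<exists>\<epsilon>>0. \<forall>z. 0 < norm z \<and> norm z < \<epsilon> \<longrightarrow>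
            (F z - F (z ^ 2)) / (z - z ^ 2) = deriv F z / 2)
     \<and> (\<forall>n\<ge>2. even n \<longrightarrow>
            \<phi> n = (of_nat n + 1) / (of_nat n - 1) * \<phi> (n - 1))
     \<and> (\<forall>n\<ge>2. odd n \<longrightarrow>
            \<phi> n = (of_nat n + 1) / (of_nat n - 1) * \<phi> (n - 1)
                    - 4 / (of_nat n - 1) * \<phi> ((n - 1) div 2))
     \<and> (let \<psi> = (\<lambda>n. \<phi> n / of_nat n) in
          \<psi> 1 = 1
          \<and> (\<forall>n\<ge>2. even n \<longrightarrow> \<psi> n = (1 + 1 / of_nat n) * \<psi> (n - 1))
          \<and> (\<forall>n\<ge>3. odd n \<longrightarrow>
                 \<psi> n = (1 + 1 / of_nat n) * \<psi> (n - 1) - 2 / of_nat n * \<psi> ((n - 1) div 2)))"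
proof -
  obtain R Gf where R: "R > 0" "ereal R \<le> fps_conv_radius Gf" "ereal R \<le> fps_conv_radius (Abs_fps \<phi>)"
    and Gn: "\<And>k. Gf $ k = (if k = 0 then 0 else \<phi> (k - 1) / of_nat k)"
    and dG: "\<And>z. norm z < R \<Longrightarrow> (eval_fps Gf has_field_derivative \<Phi> z) (at z)"
    using part1[OF conv Phi_def] by blast
  define G where "G = eval_fps Gf"
  have PhiP: "\<Phi> z = eval_fps (Abs_fps \<phi>) z" for z by (simp add: eval_fps_def Phi_def)
  have G0: "G 0 = 0" by (simp add: G_def eval_fps_at_0 Gn)
  have dGw: "(G has_field_derivative \<Phi> x) (at x within ball 0 R)" if "x \<in> ball 0 R" for x
    using dG[of x] that by (auto simp: G_def intro: has_field_derivative_at_within)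
  have ci: "(\<Phi> has_contour_integral (G b - G a)) (linepath a b)" if "norm a < R" "norm b < R" for a b
  proof -
    have "closed_segment a b \<subseteq> ball 0 R"
      using that by (intro closed_segment_subset) auto
    then show ?thesis
      using contour_integral_primitive[OF dGw, of "linepath a b"] by auto
  qed
  have FG: "F z = G z" if "norm z < R" for z
    using ci[of 0 z] that R(1) G0 by (simp add: F_def contour_integral_unique)
  have dF: "deriv F z = \<Phi> z" if "norm z < R" for z
  proof -
    have "(F has_field_derivative \<Phi> z) (at z)"
      by (rule has_field_derivative_transform_within_open[of G _ _ "ball 0 R"])
         (use dG[OF that] that FG in \<open>auto simp: G_def\<close>)
    then show ?thesis by (rule DERIV_imp_deriv)
  qed
  obtain \<epsilon> where \<epsilon>: "\<epsilon> > 0" "\<And>z. norm z < \<epsilon> \<Longrightarrow>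
       ((\<lambda>r::real. \<Phi> (of_real r * z + (1 - of_real r) * z ^ 2)) has_integral \<Phi> z / 2) {0..1}"
    using inteq by blast
  define d where "d = min \<epsilon> (min R 1)"
  have d: "0 < d" "d \<le> R" "d \<le> 1" "d \<le> \<epsilon>" using R(1) \<epsilon>(1) by (auto simp: d_def)
  have z2: "norm (z^2) < d" "norm (z^2) \<le> norm z" if "norm z < d" for z :: complex
  proof -
    have z1: "norm z < 1" using that d by simp
    have "norm (z^2) = norm z * norm z" by (simp add: power2_eq_square norm_mult)
    also have "\<dots> \<le> norm z * 1" using z1 by (intro mult_left_mono) auto
    finally show "norm (z^2) < d" "norm (z^2) \<le> norm z" using that by simp_all
  qed
  have eqG: "G z - G (z^2) = (z - z^2) * (\<Phi> z / 2)" if "norm z < d" for z :: complex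
  proof -
    have nz: "norm z < R" "norm (z^2) < R" using that z2[OF that] d by simp_all
    have "((\<lambda>x. \<Phi> (linepath (z^2) z x) * (z - z^2)) has_integral (G z - G (z^2))) {0..1}"
      using ci[OF nz(2) nz(1)] by (simp add: has_contour_integral_linepath)
    moreover have "((\<lambda>x. \<Phi> (linepath (z^2) z x) * (z - z^2)) has_integral (\<Phi> z / 2 * (z - z^2))) {0..1}"
    proof -
      have l: "(\<lambda>x. \<Phi> (linepath (z^2) z x) * (z - z^2)) = (\<lambda>r::real. \<Phi> (of_real r * z + (1 - of_real r) * z ^ 2) * (z - z^2))"
        by (auto simp: linepath_def scaleR_conv_of_real algebra_simps)
      show ?thesis unfolding l
        by (rule has_integral_mult_left[OF \<epsilon>(2)]) (use that d in simp)
    qed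
    ultimately show ?thesis by (metis has_integral_unique mult.commute)
  qed
  have coef: "Gf $ k - (if even k then Gf $ (k div 2) else 0) =
           ((if k = 0 then 0 else Abs_fps \<phi> $ (k - 1)) - (if k < 2 then 0 else Abs_fps \<phi> $ (k - 2))) / 2" for k
    by (rule part2[OF R d(1-3)]) (use eqG in \<open>simp add: G_def PhiP\<close>)
  have rec: "(\<forall>n\<ge>2. even n \<longrightarrow> \<phi> n = (of_nat n + 1) / (of_nat n - 1) * \<phi> (n - 1))
     \<and> (\<forall>n\<ge>2. odd n \<longrightarrow>
            \<phi> n = (of_nat n + 1) / (of_nat n - 1) * \<phi> (n - 1)
                    - 4 / (of_nat n - 1) * \<phi> ((n - 1) div 2))"
    by (rule part3) (use coef in \<open>simp only: Gn fps_nth_Abs_fps\<close>)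
  have first: "\<exists>\<epsilon>>0. \<forall>z. 0 < norm z \<and> norm z < \<epsilon> \<longrightarrow>
            (F z - F (z ^ 2)) / (z - z ^ 2) = deriv F z / 2"
  proof (intro exI[of _ d] conjI allI impI)
    fix z :: complex assume z: "0 < norm z \<and> norm z < d"
    have nz: "norm z < R" "norm (z^2) < R" using z z2[of z] d by auto
    have "z - z^2 \<noteq> 0"
    proof
      assume "z - z^2 = 0"
      hence "z * (1 - z) = 0" by (simp add: algebra_simps power2_eq_square)
      moreover have "z \<noteq> 1" using z d by auto
      ultimately show False using z by auto
    qed
    then show "(F z - F (z ^ 2)) / (z - z ^ 2) = deriv F z / 2"
      using eqG[of z] z by (simp add: FG[OF nz(1)] FG[OF nz(2)] dF[OF nz(1)])
  qed (use d in simp)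
  have psi: "let \<psi> = (\<lambda>n. \<phi> n / of_nat n) in
          \<psi> 1 = 1
          \<and> (\<forall>n\<ge>2. even n \<longrightarrow> \<psi> n = (1 + 1 / of_nat n) * \<psi> (n - 1))
          \<and> (\<forall>n\<ge>3. odd n \<longrightarrow>
                 \<psi> n = (1 + 1 / of_nat n) * \<psi> (n - 1) - 2 / of_nat n * \<psi> ((n - 1) div 2))"
    unfolding Let_def
  proof (intro conjI allI impI)
    show "\<phi> 1 / of_nat 1 = 1" using phi1 by simp
  next
    fix n :: nat assume n: "2 \<le> n" "even n"
    have x0: "(of_nat n :: complex) \<noteq> 0" using n by simp
    have y0: "(of_nat n :: complex) - 1 \<noteq> 0" using n by (metis of_nat_1 of_nat_eq_iff right_minus_eq numeral_le_one_iff semiring_norm(69) le_numeral_extra(4) one_le_numeral order_antisym)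
    have e: "of_nat (n - 1) = (of_nat n :: complex) - 1" using n by (simp add: of_nat_diff)
    show "\<phi> n / of_nat n = (1 + 1 / of_nat n) * (\<phi> (n - 1) / of_nat (n - 1))"
      unfolding e using rec n alg3[OF x0 y0, of "\<phi> (n - 1)"] by simp
  next
    fix n :: nat assume n: "3 \<le> n" "odd n"
    have x0: "(of_nat n :: complex) \<noteq> 0" using n by simp
    have y0: "(of_nat n :: complex) - 1 \<noteq> 0" using n by simp
    have e: "of_nat (n - 1) = (of_nat n :: complex) - 1" using n by (simp add: of_nat_diff)
    have e2: "of_nat ((n - 1) div 2) = ((of_nat n :: complex) - 1) / 2"
      using n by (auto elim!: oddE)
    show "\<phi> n / of_nat n = (1 + 1 / of_nat n) * (\<phi> (n - 1) / of_nat (n - 1))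
          - 2 / of_nat n * (\<phi> ((n - 1) div 2) / of_nat ((n - 1) div 2))"
    proof -
      have r: "\<phi> n = (of_nat n + 1) / (of_nat n - 1) * \<phi> (n - 1) - 4 / (of_nat n - 1) * \<phi> ((n - 1) div 2)"
        using rec n by auto
      show ?thesis unfolding e e2 by (subst r) (rule alg4[OF x0 y0])
    qed
  qed
  show ?thesis using first rec psi by blast
qed

end
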